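(* There exist positive bounded operators $A,B\colon\ell^2\to\ell^2$ such that $AB-BA=I+N$, where $N$ is a nilpotent operator of nil-index $3$ (i.e. $N^3=0$ and $N^2\neq0$). Furthermore, there is an absolute constant $K>0$ such that for every $\varepsilon\in(0,1)$ the operators $A$, $B$ (positive, with $AB-BA=I+N$ and $N$ nilpotent of nil-index $3$) can be chosen so that $\|A\|\leq K\varepsilon^{-3}$, $\|B\|\leq K\varepsilon^{-3}$ and $\|N\|\leq K\varepsilon$.
   Context: $\ell^2$ is the real Hilbert lattice of square-summable sequences with the coordinatewise order; an operator on $\ell^2$ is positive if it maps nonnegative sequences to nonnegative sequences. $I$ is the identity operator and $\|\cdot\|$ the operator norm. *)

theory Defs
  imports Complex_Main
begin

text \<open>Operators on l2 are
  functions (nat => real) => (nat => real); only their behaviour on l2 matters.\<close>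

definition l2 :: "(nat \<Rightarrow> real) set" where
  "l2 = {x. summable (\<lambda>n. (x n)\<^sup>2)}"

definition l2_norm :: "(nat \<Rightarrow> real) \<Rightarrow> real" where
  "l2_norm x = sqrt (\<Sum>n. (x n)\<^sup>2)"

definition bounded_op :: "((nat \<Rightarrow> real) \<Rightarrow> (nat \<Rightarrow> real)) \<Rightarrow> bool" where
  "bounded_op T \<longleftrightarrow>
     (\<forall>x\<in>l2. T x \<in> l2) \<and>
     (\<forall>x\<in>l2. \<forall>y\<in>l2. T (\<lambda>n. x n + y n) = (\<lambda>n. T x n + T y n)) \<and>
     (\<forall>x\<in>l2. \<forall>c::real. T (\<lambda>n. c * x n) = (\<lambda>n. c * T x n)) \<and>
     (\<exists>C. \<forall>x\<in>l2. l2_norm (T x) \<le> C * l2_norm x)"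

definition op_norm :: "((nat \<Rightarrow> real) \<Rightarrow> (nat \<Rightarrow> real)) \<Rightarrow> real" where
  "op_norm T = Sup {l2_norm (T x) | x. x \<in> l2 \<and> l2_norm x \<le> 1}"

definition positive_op :: "((nat \<Rightarrow> real) \<Rightarrow> (nat \<Rightarrow> real)) \<Rightarrow> bool" where
  "positive_op T \<longleftrightarrow> (\<forall>x\<in>l2. (\<forall>n. 0 \<le> x n) \<longrightarrow> (\<forall>n. 0 \<le> T x n))"

definition nil_index3 :: "((nat \<Rightarrow> real) \<Rightarrow> (nat \<Rightarrow> real)) \<Rightarrow> bool" where
  "nil_index3 N \<longleftrightarrow> (\<forall>x\<in>l2. (\<forall>n. N (N (N x)) n = 0)) \<and> (\<exists>x\<in>l2. \<exists>n. N (N x) n \<noteq> 0)"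

definition commutator_eq ::
  "((nat \<Rightarrow> real) \<Rightarrow> (nat \<Rightarrow> real)) \<Rightarrow> ((nat \<Rightarrow> real) \<Rightarrow> (nat \<Rightarrow> real))
   \<Rightarrow> ((nat \<Rightarrow> real) \<Rightarrow> (nat \<Rightarrow> real)) \<Rightarrow> bool" where
  "commutator_eq A B N \<longleftrightarrow> (\<forall>x\<in>l2. \<forall>n. A (B x) n - B (A x) n = x n + N x n)"

end

theory Submission
  imports Defs
begin


lemma core:
  fixes x w :: "nat \<Rightarrow> real" and f :: "nat \<Rightarrow> nat"
  assumes sx: "summable (\<lambda>n. (x n)^2)"
  and inj: "\<And>m n. w m \<noteq> 0 \<Longrightarrow> w n \<noteq> 0 \<Longrightarrow> f m = f n \<Longrightarrow> m = n"
  and W: "\<And>n. \<bar>w n\<bar> \<le> W"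
  shows "summable (\<lambda>n. (w n * x (f n))^2) \<and> (\<Sum>n. (w n * x (f n))^2) \<le> W^2 * (\<Sum>n. (x n)^2)"
proof -
  have bound: "(\<Sum>n<k. (w n * x (f n))^2) \<le> W^2 * (\<Sum>n. (x n)^2)" for k
  proof -
    let ?S = "{n. n<k \<and> w n \<noteq> 0}"
    have "(\<Sum>n<k. (w n * x (f n))^2) = (\<Sum>n\<in>?S. (w n * x (f n))^2)"
      by (rule sum.mono_neutral_right) auto
    also have "\<dots> \<le> (\<Sum>n\<in>?S. W^2 * (x (f n))^2)"
    proof (rule sum_mono)
      fix n
      have "(w n)^2 \<le> W^2" by (metis abs_ge_zero power2_abs power_mono W)
      then show "(w n * x (f n))^2 \<le> W^2 * (x (f n))^2"
        by (simp add: power_mult_distrib mult_right_mono)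
    qed
    also have "\<dots> = W^2 * (\<Sum>m\<in>f`?S. (x m)^2)"
    proof -
      have "inj_on f ?S" using inj by (auto simp: inj_on_def)
      then show ?thesis by (simp add: sum_distrib_left sum.reindex)
    qed
    also have "\<dots> \<le> W^2 * (\<Sum>n. (x n)^2)"
      by (rule mult_left_mono, rule sum_le_suminf[OF sx]) auto
    finally show ?thesis .
  qed
  have s: "summable (\<lambda>n. (w n * x (f n))^2)"
    by (rule summableI_nonneg_bounded[OF _ bound]) auto
  then show ?thesis using suminf_le_const[OF s bound] by blast
qed

lemma sq5: "((a::real)+b+c+d+g)^2 \<le> 5*(a^2+b^2+c^2+d^2+g^2)"
proof -
  have "5*(a^2+b^2+c^2+d^2+g^2) - (a+b+c+d+g)^2 = (a-b)^2+(a-c)^2+(a-d)^2+(a-g)^2+(b-c)^2+(b-d)^2+(b-g)^2+(c-d)^2+(c-g)^2+(d-g)^2"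
    by (simp add: power2_eq_square algebra_simps)
  moreover have "0 \<le> (a-b)^2+(a-c)^2+(a-d)^2+(a-g)^2+(b-c)^2+(b-d)^2+(b-g)^2+(c-d)^2+(c-g)^2+(d-g)^2"
    by simp
  ultimately show ?thesis by linarith
qed

lemma comb5:
  fixes y1 y2 y3 y4 y5 :: "nat \<Rightarrow> real"
  assumes s1: "summable (\<lambda>n. (y1 n)^2)" and s2: "summable (\<lambda>n. (y2 n)^2)"
    and s3: "summable (\<lambda>n. (y3 n)^2)" and s4: "summable (\<lambda>n. (y4 n)^2)"
    and s5: "summable (\<lambda>n. (y5 n)^2)"
    and b1: "(\<Sum>n. (y1 n)^2) \<le> S" and b2: "(\<Sum>n. (y2 n)^2) \<le> S"
    and b3: "(\<Sum>n. (y3 n)^2) \<le> S" and b4: "(\<Sum>n. (y4 n)^2) \<le> S"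
    and b5: "(\<Sum>n. (y5 n)^2) \<le> S"
  shows "summable (\<lambda>n. (y1 n + y2 n + y3 n + y4 n + y5 n)^2) \<and>
         (\<Sum>n. (y1 n + y2 n + y3 n + y4 n + y5 n)^2) \<le> 25 * S"
proof -
  let ?g = "\<lambda>n. 5 * ((y1 n)^2 + (y2 n)^2 + (y3 n)^2 + (y4 n)^2 + (y5 n)^2)"
  have sg0: "summable (\<lambda>n. (y1 n)^2 + (y2 n)^2 + (y3 n)^2 + (y4 n)^2 + (y5 n)^2)"
    by (intro summable_add s1 s2 s3 s4 s5)
  have sg: "summable ?g" by (rule summable_mult[OF sg0])
  have le: "\<And>n. (y1 n + y2 n + y3 n + y4 n + y5 n)^2 \<le> ?g n" by (rule sq5)
  have s: "summable (\<lambda>n. (y1 n + y2 n + y3 n + y4 n + y5 n)^2)"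
    by (rule summable_comparison_test'[OF sg, of 0]) (use le in auto)
  have "(\<Sum>n. (y1 n + y2 n + y3 n + y4 n + y5 n)^2) \<le> suminf ?g"
    by (rule suminf_le[OF le s sg])
  also have "suminf ?g = 5 * ((\<Sum>n. (y1 n)^2) + (\<Sum>n. (y2 n)^2) + (\<Sum>n. (y3 n)^2) + (\<Sum>n. (y4 n)^2) + (\<Sum>n. (y5 n)^2))"
  proof -
    have "(\<Sum>n. (y1 n)^2 + (y2 n)^2 + (y3 n)^2 + (y4 n)^2 + (y5 n)^2) = (\<Sum>n. (y1 n)^2) + (\<Sum>n. (y2 n)^2) + (\<Sum>n. (y3 n)^2) + (\<Sum>n. (y4 n)^2) + (\<Sum>n. (y5 n)^2)"
      by (subst suminf_add[symmetric], (intro summable_add s1 s2 s3 s4 s5)+)+ (rule refl)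
    then show ?thesis by (simp only: suminf_mult[OF sg0])
  qed
  also have "\<dots> \<le> 25 * S"
  proof -
    have "(\<Sum>n. (y1 n)^2) + (\<Sum>n. (y2 n)^2) + (\<Sum>n. (y3 n)^2) + (\<Sum>n. (y4 n)^2) + (\<Sum>n. (y5 n)^2) \<le> 5 * S"
      using b1 b2 b3 b4 b5 by linarith
    then have "5 * ((\<Sum>n. (y1 n)^2) + (\<Sum>n. (y2 n)^2) + (\<Sum>n. (y3 n)^2) + (\<Sum>n. (y4 n)^2) + (\<Sum>n. (y5 n)^2)) \<le> 5 * (5 * S)" by (rule mult_left_mono) simp
    then show ?thesis by simp
  qed
  finally show ?thesis using s by blast
qed


lemma op5:
  fixes x :: "nat \<Rightarrow> real" and T :: "(nat \<Rightarrow> real) \<Rightarrow> nat \<Rightarrow> real"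
    and wa wb wc wd we :: "nat \<Rightarrow> real" and fa fb fc fd fe :: "nat \<Rightarrow> nat"
  assumes x: "x \<in> l2"
  and i1: "\<And>m n. wa m \<noteq> 0 \<Longrightarrow> wa n \<noteq> 0 \<Longrightarrow> fa m = fa n \<Longrightarrow> m = n"
  and i2: "\<And>m n. wb m \<noteq> 0 \<Longrightarrow> wb n \<noteq> 0 \<Longrightarrow> fb m = fb n \<Longrightarrow> m = n"
  and i3: "\<And>m n. wc m \<noteq> 0 \<Longrightarrow> wc n \<noteq> 0 \<Longrightarrow> fc m = fc n \<Longrightarrow> m = n"
  and i4: "\<And>m n. wd m \<noteq> 0 \<Longrightarrow> wd n \<noteq> 0 \<Longrightarrow> fd m = fd n \<Longrightarrow> m = n"
  and i5: "\<And>m n. we m \<noteq> 0 \<Longrightarrow> we n \<noteq> 0 \<Longrightarrow> fe m = fe n \<Longrightarrow> m = n"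
  and W1: "\<And>n. \<bar>wa n\<bar> \<le> W" and W2: "\<And>n. \<bar>wb n\<bar> \<le> W" and W3: "\<And>n. \<bar>wc n\<bar> \<le> W"
  and W4: "\<And>n. \<bar>wd n\<bar> \<le> W" and W5: "\<And>n. \<bar>we n\<bar> \<le> W"
  and T: "\<And>n. T x n = wa n * x (fa n) + wb n * x (fb n) + wc n * x (fc n) + wd n * x (fd n) + we n * x (fe n)"
  shows "T x \<in> l2 \<and> l2_norm (T x) \<le> 5 * W * l2_norm x"
proof -
  have sx: "summable (\<lambda>n. (x n)^2)" using x by (simp add: l2_def)
  note c1 = core[OF sx i1 W1] and c2 = core[OF sx i2 W2] and c3 = core[OF sx i3 W3]
    and c4 = core[OF sx i4 W4] and c5 = core[OF sx i5 W5]
  have cc: "summable (\<lambda>n. (wa n * x (fa n) + wb n * x (fb n) + wc n * x (fc n) + wd n * x (fd n) + we n * x (fe n))^2) \<and>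
    (\<Sum>n. (wa n * x (fa n) + wb n * x (fb n) + wc n * x (fc n) + wd n * x (fd n) + we n * x (fe n))^2) \<le> 25 * (W^2 * (\<Sum>n. (x n)^2))"
    by (rule comb5[OF c1[THEN conjunct1] c2[THEN conjunct1] c3[THEN conjunct1] c4[THEN conjunct1] c5[THEN conjunct1]
       c1[THEN conjunct2] c2[THEN conjunct2] c3[THEN conjunct2] c4[THEN conjunct2] c5[THEN conjunct2]])
  have Tx: "T x = (\<lambda>n. wa n * x (fa n) + wb n * x (fb n) + wc n * x (fc n) + wd n * x (fd n) + we n * x (fe n))"
    using T by auto
  have W0: "0 \<le> W" using W1[of 0] by linarith
  have "l2_norm (T x) = sqrt (\<Sum>n. (T x n)^2)" by (simp add: l2_norm_def)
  also have "\<dots> \<le> sqrt ((5*W)^2 * (\<Sum>n. (x n)^2))"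
  proof (rule real_sqrt_le_mono)
    have "(5*W)^2 * (\<Sum>n. (x n)^2) = 25 * (W^2 * (\<Sum>n. (x n)^2))" by (simp add: power_mult_distrib)
    then show "(\<Sum>n. (T x n)^2) \<le> (5*W)^2 * (\<Sum>n. (x n)^2)" using cc[THEN conjunct2] unfolding Tx by simp
  qed
  also have "\<dots> = 5 * W * l2_norm x"
    using W0 by (simp add: l2_norm_def real_sqrt_mult)
  finally show ?thesis using cc Tx by (simp add: l2_def)
qed

lemma zero_l2: "(\<lambda>_. 0::real) \<in> l2" by (simp add: l2_def)

lemma opnorm_le:
  assumes "\<And>x. x \<in> l2 \<Longrightarrow> l2_norm (T x) \<le> C * l2_norm x" and "0 \<le> C"
  shows "op_norm T \<le> C"
  unfolding op_norm_def
proof (rule cSup_least)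
  show "{l2_norm (T x) |x. x \<in> l2 \<and> l2_norm x \<le> 1} \<noteq> {}"
    using zero_l2 by (auto simp: l2_norm_def)
next
  fix y assume "y \<in> {l2_norm (T x) |x. x \<in> l2 \<and> l2_norm x \<le> 1}"
  then obtain x where x: "x \<in> l2" "l2_norm x \<le> 1" "y = l2_norm (T x)" by auto
  have "y \<le> C * l2_norm x" using assms(1) x by auto
  also have "\<dots> \<le> C * 1" by (rule mult_left_mono[OF x(2) assms(2)])
  finally show "y \<le> C" by simp
qed



definition opA :: "real \<Rightarrow> (nat \<Rightarrow> real) \<Rightarrow> nat \<Rightarrow> real" where
  "opA e x n = (if even n then 1/e else 0) * x (2*n+2) + (if even n then 1/e^2 else 0) * x (2*n+3)
     + (if odd n then e else 0) * x (2*n-2) + (if odd n then 1 else 0) * x (2*n-1)"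

definition opB :: "real \<Rightarrow> (nat \<Rightarrow> real) \<Rightarrow> nat \<Rightarrow> real" where
  "opB e x n = (if n mod 4 = 0 then 1/e else 0) * x (n div 2 + 1) + (if n mod 4 = 1 then 1 else 0) * x (n div 2 + 1)
     + (if n mod 4 = 2 then e else 0) * x (n div 2 - 1) + (if n mod 4 = 3 then e^2 else 0) * x (n div 2 - 1)
     + (if n mod 4 = 3 then e else 0) * x (n div 2)"

definition opN :: "real \<Rightarrow> (nat \<Rightarrow> real) \<Rightarrow> nat \<Rightarrow> real" where
  "opN e x n = (if n mod 4 = 1 then -e else 0) * x (n-1) + (if n mod 4 = 3 then -(e^2) else 0) * x (n-3)
     + (if n mod 4 = 3 then -e else 0) * x (n-2) + (if n mod 4 = 3 then -e else 0) * x (n-1)"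

lemma A_ev: "opA e x (2*p) = x (4*p+2) / e + x (4*p+3) / e^2"
  by (simp add: opA_def)
lemma A_od: "opA e x (2*p+1) = e * x (4*p) + x (4*p+1)"
  by (simp add: opA_def)

lemma B0: "opB e x (4*q) = x (2*q+1) / e"
proof -
  have m: "(4*q) mod 4 = 0" by presburger
  have d: "(4*q) div 2 = 2*q + 0" by presburger
  show ?thesis unfolding opB_def using m d by simp
qed
lemma B1: "opB e x (4*q+1) = x (2*q+1)"
proof -
  have m: "(4*q+1) mod 4 = 1" by presburger
  have d: "(4*q+1) div 2 = 2*q + 0" by presburger
  show ?thesis unfolding opB_def using m d by simp
qed
lemma B2: "opB e x (4*q+2) = e * x (2*q)"
proof -
  have m: "(4*q+2) mod 4 = 2" by presburger
  have d: "(4*q+2) div 2 = 2*q + 1" by presburger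
  show ?thesis unfolding opB_def using m d by simp
qed
lemma B3: "opB e x (4*q+3) = e^2 * x (2*q) + e * x (2*q+1)"
proof -
  have m: "(4*q+3) mod 4 = 3" by presburger
  have d: "(4*q+3) div 2 = 2*q + 1" by presburger
  show ?thesis unfolding opB_def using m d by simp
qed

lemma N0: "opN e x (4*q) = 0"
proof -
  have m: "(4*q) mod 4 = 0" by presburger
  have d: "(4*q) div 2 = 2*q + 0" by presburger
  show ?thesis unfolding opN_def using m d by simp
qed
lemma N1: "opN e x (4*q+1) = - e * x (4*q)"
proof -
  have m: "(4*q+1) mod 4 = 1" by presburger
  have d: "(4*q+1) div 2 = 2*q + 0" by presburger
  show ?thesis unfolding opN_def using m d by simp
qed
lemma N2: "opN e x (4*q+2) = 0"
proof -
  have m: "(4*q+2) mod 4 = 2" by presburger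
  have d: "(4*q+2) div 2 = 2*q + 1" by presburger
  show ?thesis unfolding opN_def using m d by simp
qed
lemma N3: "opN e x (4*q+3) = - (e^2 * x (4*q)) - e * x (4*q+1) - e * x (4*q+2)"
proof -
  have m: "(4*q+3) mod 4 = 3" by presburger
  have d: "(4*q+3) div 2 = 2*q + 1" by presburger
  show ?thesis unfolding opN_def using m d by simp
qed


lemma A4_0: "opA e y (4*q) = y (8*q+2)/e + y (8*q+3)/e^2" using A_ev[of e y "2*q"] by simp
lemma A4_1: "opA e y (4*q+1) = e * y (8*q) + y (8*q+1)" using A_od[of e y "2*q"] by simp
lemma A4_2: "opA e y (4*q+2) = y (8*q+6)/e + y (8*q+7)/e^2"
proof -
  have h0: "2*(2*q+1) = 4*q+2" by simp
  have h1: "4*(2*q+1)+2 = 8*q+6" by simp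
  have h2: "4*(2*q+1)+3 = 8*q+7" by simp
  show ?thesis using A_ev[of e y "2*q+1"] by (simp only: h0 h1 h2)
qed
lemma A4_3: "opA e y (4*q+3) = e * y (8*q+4) + y (8*q+5)"
proof -
  have h0: "2*(2*q+1)+1 = 4*q+3" by simp
  have h1: "4*(2*q+1) = 8*q+4" by simp
  have h2: "4*(2*q+1)+1 = 8*q+5" by simp
  have h3: "8*q+4+1 = 8*q+5" by simp
  show ?thesis using A_od[of e y "2*q+1"] by (simp only: h0 h1 h2 h3)
qed

lemma B8_0: "opB e x (8*q) = x (4*q+1) / e" using B0[of e x "2*q"] by simp
lemma B8_1: "opB e x (8*q+1) = x (4*q+1)" using B1[of e x "2*q"] by simp
lemma B8_2: "opB e x (8*q+2) = e * x (4*q)" using B2[of e x "2*q"] by simp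
lemma B8_3: "opB e x (8*q+3) = e^2 * x (4*q) + e * x (4*q+1)" using B3[of e x "2*q"] by simp
lemma B8_4: "opB e x (8*q+4) = x (4*q+3) / e"
proof -
  have h0: "4*(2*q+1) = 8*q+4" by simp
  have h1: "2*(2*q+1)+1 = 4*q+3" by simp
  show ?thesis using B0[of e x "2*q+1"] by (simp only: h0 h1)
qed
lemma B8_5: "opB e x (8*q+5) = x (4*q+3)"
proof -
  have h0: "4*(2*q+1)+1 = 8*q+5" by simp
  have h1: "2*(2*q+1)+1 = 4*q+3" by simp
  show ?thesis using B1[of e x "2*q+1"] by (simp only: h0 h1)
qed
lemma B8_6: "opB e x (8*q+6) = e * x (4*q+2)"
proof -
  have h0: "4*(2*q+1)+2 = 8*q+6" by simp
  have h1: "2*(2*q+1) = 4*q+2" by simp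
  show ?thesis using B2[of e x "2*q+1"] by (simp only: h0 h1)
qed
lemma B8_7: "opB e x (8*q+7) = e^2 * x (4*q+2) + e * x (4*q+3)"
proof -
  have h0: "4*(2*q+1)+3 = 8*q+7" by simp
  have h1: "2*(2*q+1) = 4*q+2" by simp
  have h2: "2*(2*q+1)+1 = 4*q+3" by simp
  have h3: "4*q+2+1 = 4*q+3" by simp
  show ?thesis using B3[of e x "2*q+1"] by (simp only: h0 h1 h2 h3)
qed

lemma comm_pt:
  assumes e: "e \<noteq> 0"
  shows "opA e (opB e x) n - opB e (opA e x) n = x n + opN e x n"
proof -
  obtain q j where n: "n = 4*q + j" and j: "j < 4" by (metis div_mult_mod_eq mod_less_divisor zero_less_numeral mult.commute)
  consider "j = 0" | "j = 1" | "j = 2" | "j = 3" using j by linarith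
  then show ?thesis
  proof cases
    case 1
    have "opA e (opB e x) (4*q) - opB e (opA e x) (4*q) = x (4*q) + opN e x (4*q)"
      apply (simp only: A4_0 B8_2 B8_3 B0 A_od N0)
      using e by (simp add: field_simps power2_eq_square)
    then show ?thesis using 1 n by simp
  next
    case 2
    have "opA e (opB e x) (4*q+1) - opB e (opA e x) (4*q+1) = x (4*q+1) + opN e x (4*q+1)"
      apply (simp only: A4_1 B8_0 B8_1 B1 A_od N1)
      using e by (simp add: field_simps power2_eq_square)
    then show ?thesis using 2 n by simp
  next
    case 3
    have "opA e (opB e x) (4*q+2) - opB e (opA e x) (4*q+2) = x (4*q+2) + opN e x (4*q+2)"
      apply (simp only: A4_2 B8_6 B8_7 B2 A_ev N2)
      using e by (simp add: field_simps power2_eq_square)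
    then show ?thesis using 3 n by simp
  next
    case 4
    have "opA e (opB e x) (4*q+3) - opB e (opA e x) (4*q+3) = x (4*q+3) + opN e x (4*q+3)"
      apply (simp only: A4_3 B8_4 B8_5 B3 A_ev A_od N3)
      using e by (simp add: field_simps power2_eq_square)
    then show ?thesis using 4 n by simp
  qed
qed



lemma nil_pt: "opN e (opN e (opN e x)) n = 0"
proof -
  obtain q j where n: "n = 4*q + j" and j: "j < 4" by (metis div_mult_mod_eq mod_less_divisor zero_less_numeral mult.commute)
  consider "j = 0" | "j = 1" | "j = 2" | "j = 3" using j by linarith
  then show ?thesis
  proof cases
    case 1 then show ?thesis using n N0[of e _ q] by simp
  next
    case 2 then show ?thesis using n N1[of e _ q] N0[of e _ q] by simp
  next
    case 3 then show ?thesis using n N2[of e _ q] by simp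
  next
    case 4
    have "opN e (opN e (opN e x)) (4*q+3) = 0"
      by (simp only: N3 N1 N0 N2)
    then show ?thesis using 4 n by simp
  qed
qed

lemma sq_witness: "opN e (opN e (\<lambda>n. if n = 0 then 1 else 0)) 3 = e^2"
proof -
  have h: "opN e y 3 = - (e^2 * y 0) - e * y 1 - e * y 2" for y using N3[of e y 0] by (simp only: mult_0_right add_0_left)
  have h1: "opN e y 1 = - e * y 0" for y using N1[of e y 0] by (simp only: mult_0_right add_0_left)
  have h0: "opN e y 0 = 0" for y using N0[of e y 0] by (simp only: mult_0_right add_0_left)
  have h2: "opN e y 2 = 0" for y using N2[of e y 0] by (simp only: mult_0_right add_0_left)
  show ?thesis by (simp only: h h1 h0 h2) (simp add: power2_eq_square)
qed

lemma witness_l2: "(\<lambda>n. if n = 0 then 1 else 0::real) \<in> l2"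
proof -
  have "summable (\<lambda>n. (if n = 0 then 1 else 0::real)^2)"
    by (rule summable_finite[of "{0}"]) auto
  then show ?thesis by (simp add: l2_def)
qed

lemma A_bound:
  assumes e: "0 < e" "e < 1" and x: "x \<in> l2"
  shows "opA e x \<in> l2 \<and> l2_norm (opA e x) \<le> 5 * (1/e^2) * l2_norm x"
proof -
  have e2: "e^2 < 1" "0 < e^2" using e by (auto simp: power_less_one_iff)
  have b1: "1/e \<le> 1/e^2" using e by (simp add: divide_le_cancel power2_eq_square frac_le)
  have e3: "e*e^2 \<le> 1" by (rule mult_le_one) (use e e2 in auto)
  have b3: "e \<le> 1/e^2" using e e3 by (simp add: field_simps)
  have b4: "1 \<le> 1/e^2" using e2 by simp
  show ?thesis
  proof (rule op5[where wa = "\<lambda>n. if even n then 1/e else 0" and fa = "\<lambda>n. 2*n+2"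
        and wb = "\<lambda>n. if even n then 1/e^2 else 0" and fb = "\<lambda>n. 2*n+3"
        and wc = "\<lambda>n. if odd n then e else 0" and fc = "\<lambda>n. 2*n-2"
        and wd = "\<lambda>n. if odd n then 1 else 0" and fd = "\<lambda>n. 2*n-1"
        and we = "\<lambda>n. 0" and fe = "\<lambda>n. n", OF x])
    fix n show "opA e x n = (if even n then 1/e else 0) * x (2*n+2) + (if even n then 1/e^2 else 0) * x (2*n+3)
      + (if odd n then e else 0) * x (2*n-2) + (if odd n then 1 else 0) * x (2*n-1) + 0 * x n"
      by (simp add: opA_def)
  qed (use e b1 b4 in \<open>auto split: if_splits elim!: oddE intro: b3\<close>)
qed




lemma injh1: "m mod 4 = n mod 4 \<Longrightarrow> (m::nat) div 2 = n div 2 \<Longrightarrow> m = n"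
proof -
  assume a: "m mod 4 = n mod 4" "m div 2 = n div 2"
  have "m mod 2 = n mod 2" using a(1) by (metis mod_mod_cancel dvd_triv_left numeral_Bit0 mult_2)
  then show "m = n" using a(2) by (metis div_mult_mod_eq)
qed
lemma injh2: "m mod 4 = n mod 4 \<Longrightarrow> 2 \<le> m mod 4 \<Longrightarrow> (m::nat) div 2 - 1 = n div 2 - 1 \<Longrightarrow> m = n"
proof -
  assume a: "m mod 4 = n mod 4" "2 \<le> m mod 4" "m div 2 - 1 = n div 2 - 1"
  have "2 \<le> m" using a(2) mod_less_eq_dividend[of m 4] by linarith
  moreover have "2 \<le> n" using a(1,2) mod_less_eq_dividend[of n 4] by linarith
  ultimately have "1 \<le> m div 2" "1 \<le> n div 2" using div_le_mono[of 2 m 2] div_le_mono[of 2 n 2] by auto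
  then have "m div 2 = n div 2" using a(3) by linarith
  then show "m = n" using injh1 a(1) by blast
qed

lemma injh3: "m mod 4 = n mod 4 \<Longrightarrow> k \<le> m mod 4 \<Longrightarrow> (m::nat) - k = n - k \<Longrightarrow> m = n"
proof -
  assume a: "m mod 4 = n mod 4" "k \<le> m mod 4" "m - k = n - k"
  have "k \<le> m" using a(2) mod_less_eq_dividend[of m 4] by linarith
  moreover have "k \<le> n" using a(1,2) mod_less_eq_dividend[of n 4] by linarith
  ultimately show "m = n" using a(3) by linarith
qed

lemma B_bound:
  assumes e: "0 < e" "e < 1" and x: "x \<in> l2"
  shows "opB e x \<in> l2 \<and> l2_norm (opB e x) \<le> 5 * (1/e) * l2_norm x"
proof -
  have b2: "1 \<le> 1/e" using e by simp
  have ee: "e*e \<le> 1" by (rule mult_le_one) (use e in auto)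
  have eee: "e*e*e \<le> 1" by (rule mult_le_one[OF ee]) (use e in auto)
  have b3: "e \<le> 1/e" using e ee by (simp add: field_simps)
  have b4: "e^2 \<le> 1/e" using e eee by (simp add: power2_eq_square field_simps)
  show ?thesis
  proof (rule op5[where wa = "\<lambda>n. if n mod 4 = 0 then 1/e else 0" and fa = "\<lambda>n. n div 2 + 1"
        and wb = "\<lambda>n. if n mod 4 = 1 then 1 else 0" and fb = "\<lambda>n. n div 2 + 1"
        and wc = "\<lambda>n. if n mod 4 = 2 then e else 0" and fc = "\<lambda>n. n div 2 - 1"
        and wd = "\<lambda>n. if n mod 4 = 3 then e^2 else 0" and fd = "\<lambda>n. n div 2 - 1"
        and we = "\<lambda>n. if n mod 4 = 3 then e else 0" and fe = "\<lambda>n. n div 2", OF x])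
    fix n show "opB e x n = (if n mod 4 = 0 then 1/e else 0) * x (n div 2 + 1) + (if n mod 4 = 1 then 1 else 0) * x (n div 2 + 1)
     + (if n mod 4 = 2 then e else 0) * x (n div 2 - 1) + (if n mod 4 = 3 then e^2 else 0) * x (n div 2 - 1)
     + (if n mod 4 = 3 then e else 0) * x (n div 2)"
      by (simp add: opB_def)
  next
    fix m n :: nat
    show "(if m mod 4 = 0 then 1/e else 0) \<noteq> 0 \<Longrightarrow> (if n mod 4 = 0 then 1/e else 0) \<noteq> 0 \<Longrightarrow> m div 2 + 1 = n div 2 + 1 \<Longrightarrow> m = n"
      using injh1[of m n] by (auto split: if_splits)
    show "(if m mod 4 = 1 then 1 else 0::real) \<noteq> 0 \<Longrightarrow> (if n mod 4 = 1 then 1 else 0::real) \<noteq> 0 \<Longrightarrow> m div 2 + 1 = n div 2 + 1 \<Longrightarrow> m = n"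
      using injh1[of m n] by (auto split: if_splits)
    show "(if m mod 4 = 2 then e else 0) \<noteq> 0 \<Longrightarrow> (if n mod 4 = 2 then e else 0) \<noteq> 0 \<Longrightarrow> m div 2 - 1 = n div 2 - 1 \<Longrightarrow> m = n"
      using injh2[of m n] by (auto split: if_splits)
    show "(if m mod 4 = 3 then e^2 else 0) \<noteq> 0 \<Longrightarrow> (if n mod 4 = 3 then e^2 else 0) \<noteq> 0 \<Longrightarrow> m div 2 - 1 = n div 2 - 1 \<Longrightarrow> m = n"
      using injh2[of m n] by (auto split: if_splits)
    show "(if m mod 4 = 3 then e else 0) \<noteq> 0 \<Longrightarrow> (if n mod 4 = 3 then e else 0) \<noteq> 0 \<Longrightarrow> m div 2 = n div 2 \<Longrightarrow> m = n"
      using injh1[of m n] by (auto split: if_splits)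
  qed (use e b2 b3 b4 in \<open>auto split: if_splits\<close>)
qed

lemma N_bound:
  assumes e: "0 < e" "e < 1" and x: "x \<in> l2"
  shows "opN e x \<in> l2 \<and> l2_norm (opN e x) \<le> 5 * e * l2_norm x"
proof -
  have b2: "e^2 \<le> e"
  proof -
    have "e*e \<le> 1*e" by (rule mult_right_mono) (use e in auto)
    then show ?thesis by (simp add: power2_eq_square)
  qed
  show ?thesis
  proof (rule op5[where wa = "\<lambda>n. if n mod 4 = 1 then -e else 0" and fa = "\<lambda>n. n - 1"
        and wb = "\<lambda>n. if n mod 4 = 3 then -(e^2) else 0" and fb = "\<lambda>n. n - 3"
        and wc = "\<lambda>n. if n mod 4 = 3 then -e else 0" and fc = "\<lambda>n. n - 2"
        and wd = "\<lambda>n. if n mod 4 = 3 then -e else 0" and fd = "\<lambda>n. n - 1"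
        and we = "\<lambda>n. 0" and fe = "\<lambda>n. n", OF x])
    fix n show "opN e x n = (if n mod 4 = 1 then -e else 0) * x (n-1) + (if n mod 4 = 3 then -(e^2) else 0) * x (n-3)
     + (if n mod 4 = 3 then -e else 0) * x (n-2) + (if n mod 4 = 3 then -e else 0) * x (n-1) + 0 * x n"
      by (simp add: opN_def)
  next
    fix m n :: nat
    show "(if m mod 4 = 1 then -e else 0) \<noteq> 0 \<Longrightarrow> (if n mod 4 = 1 then -e else 0) \<noteq> 0 \<Longrightarrow> m - 1 = n - 1 \<Longrightarrow> m = n"
      using injh3[of m n 1] by (auto split: if_splits)
    show "(if m mod 4 = 3 then -(e^2) else 0) \<noteq> 0 \<Longrightarrow> (if n mod 4 = 3 then -(e^2) else 0) \<noteq> 0 \<Longrightarrow> m - 3 = n - 3 \<Longrightarrow> m = n"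
      using injh3[of m n 3] by (auto split: if_splits)
    show "(if m mod 4 = 3 then -e else 0) \<noteq> 0 \<Longrightarrow> (if n mod 4 = 3 then -e else 0) \<noteq> 0 \<Longrightarrow> m - 2 = n - 2 \<Longrightarrow> m = n"
      using injh3[of m n 2] by (auto split: if_splits)
    show "(if m mod 4 = 3 then -e else 0) \<noteq> 0 \<Longrightarrow> (if n mod 4 = 3 then -e else 0) \<noteq> 0 \<Longrightarrow> m - 1 = n - 1 \<Longrightarrow> m = n"
      using injh3[of m n 1] by (auto split: if_splits)
  qed (use e b2 in \<open>auto split: if_splits\<close>)
qed



lemma lin_facts:
  "opA e (\<lambda>n. x n + y n) = (\<lambda>n. opA e x n + opA e y n)"
  "opB e (\<lambda>n. x n + y n) = (\<lambda>n. opB e x n + opB e y n)"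
  "opN e (\<lambda>n. x n + y n) = (\<lambda>n. opN e x n + opN e y n)"
  "opA e (\<lambda>n. c * x n) = (\<lambda>n. c * opA e x n)"
  "opB e (\<lambda>n. c * x n) = (\<lambda>n. c * opB e x n)"
  "opN e (\<lambda>n. c * x n) = (\<lambda>n. c * opN e x n)"
  by (simp_all add: opA_def opB_def opN_def fun_eq_iff algebra_simps)

lemma bnd_op:
  assumes lin1: "\<And>x y. T (\<lambda>n. x n + y n) = (\<lambda>n. T x n + T y n)"
    and lin2: "\<And>x c. T (\<lambda>n. c * x n) = (\<lambda>n. c * T x n)"
    and b: "\<And>x. x \<in> l2 \<Longrightarrow> T x \<in> l2 \<and> l2_norm (T x) \<le> C * l2_norm x"
  shows "bounded_op T"
  unfolding bounded_op_def using lin1 lin2 b by blast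

lemma main:
  assumes e: "0 < e" "e < 1"
  shows "bounded_op (opA e) \<and> bounded_op (opB e) \<and> bounded_op (opN e) \<and>
    positive_op (opA e) \<and> positive_op (opB e) \<and> commutator_eq (opA e) (opB e) (opN e) \<and> nil_index3 (opN e) \<and>
    op_norm (opA e) \<le> 5 / e ^ 3 \<and> op_norm (opB e) \<le> 5 / e ^ 3 \<and> op_norm (opN e) \<le> 5 * e"
proof (intro conjI)
  show "bounded_op (opA e)" by (rule bnd_op[OF lin_facts(1) lin_facts(4) A_bound[OF e]])
  show "bounded_op (opB e)" by (rule bnd_op[OF lin_facts(2) lin_facts(5) B_bound[OF e]])
  show "bounded_op (opN e)" by (rule bnd_op[OF lin_facts(3) lin_facts(6) N_bound[OF e]])
  show "positive_op (opA e)" unfolding positive_op_def opA_def using e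
    by (auto intro!: add_nonneg_nonneg mult_nonneg_nonneg)
  show "positive_op (opB e)" unfolding positive_op_def opB_def using e
    by (auto intro!: add_nonneg_nonneg mult_nonneg_nonneg)
  show "commutator_eq (opA e) (opB e) (opN e)" unfolding commutator_eq_def
    using comm_pt e by auto
  show "nil_index3 (opN e)" unfolding nil_index3_def
  proof (intro conjI ballI allI bexI exI)
    show "opN e (opN e (\<lambda>n. if n = 0 then 1 else 0)) 3 \<noteq> 0" using sq_witness[of e] e by simp
  qed (use nil_pt witness_l2 in auto)
  have e3: "e^3 \<le> e^2" using e by (simp add: power_decreasing)
  have i1: "1/e^2 \<le> 1/e^3" using e e3 by (simp add: frac_le)
  have e31: "e^3 \<le> e^1" by (rule power_decreasing) (use e in auto)
  have i2: "1/e \<le> 1/e^3" using e e31 by (intro frac_le) auto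
  show "op_norm (opA e) \<le> 5 / e ^ 3"
  proof -
    have "op_norm (opA e) \<le> 5 * (1/e^2)" by (rule opnorm_le) (use A_bound[OF e] e in auto)
    then show ?thesis using i1 by simp
  qed
  show "op_norm (opB e) \<le> 5 / e ^ 3"
  proof -
    have "op_norm (opB e) \<le> 5 * (1/e)" by (rule opnorm_le) (use B_bound[OF e] e in auto)
    then show ?thesis using i2 by simp
  qed
  show "op_norm (opN e) \<le> 5 * e"
    by (rule opnorm_le) (use N_bound[OF e] e in auto)
qed


theorem theorem3p2:
  shows "(\<exists>A B N. bounded_op A \<and> bounded_op B \<and> bounded_op N \<and>
            positive_op A \<and> positive_op B \<and> commutator_eq A B N \<and> nil_index3 N) \<and>
         (\<exists>K::real. K > 0 \<and>
            (\<forall>\<epsilon>::real. 0 < \<epsilon> \<and> \<epsilon> < 1 \<longrightarrow>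
              (\<exists>A B N. bounded_op A \<and> bounded_op B \<and> bounded_op N \<and>
                 positive_op A \<and> positive_op B \<and> commutator_eq A B N \<and> nil_index3 N \<and>
                 op_norm A \<le> K / \<epsilon> ^ 3 \<and> op_norm B \<le> K / \<epsilon> ^ 3 \<and>
                 op_norm N \<le> K * \<epsilon>)))"
proof (rule conjI)
  show "\<exists>A B N. bounded_op A \<and> bounded_op B \<and> bounded_op N \<and>
            positive_op A \<and> positive_op B \<and> commutator_eq A B N \<and> nil_index3 N"
    using main[of "1/2"] by auto
next
  show "\<exists>K::real. K > 0 \<and>
            (\<forall>\<epsilon>::real. 0 < \<epsilon> \<and> \<epsilon> < 1 \<longrightarrow>
              (\<exists>A B N. bounded_op A \<and> bounded_op B \<and> bounded_op N \<and>
                 positive_op A \<and> positive_op B \<and> commutator_eq A B N \<and> nil_index3 N \<and>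
                 op_norm A \<le> K / \<epsilon> ^ 3 \<and> op_norm B \<le> K / \<epsilon> ^ 3 \<and>
                 op_norm N \<le> K * \<epsilon>))"
  proof (intro exI[of _ 5] conjI allI impI)
    fix \<epsilon> :: real assume "0 < \<epsilon> \<and> \<epsilon> < 1"
    then show "\<exists>A B N. bounded_op A \<and> bounded_op B \<and> bounded_op N \<and>
                 positive_op A \<and> positive_op B \<and> commutator_eq A B N \<and> nil_index3 N \<and>
                 op_norm A \<le> 5 / \<epsilon> ^ 3 \<and> op_norm B \<le> 5 / \<epsilon> ^ 3 \<and>
                 op_norm N \<le> 5 * \<epsilon>"
      using main[of \<epsilon>] by blast
  qed simp
qed

end
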